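(* For every integer $q\ge 2$, there exists a $\mathrm{TOC}_q(4,4,3)$.
   Context: $\mathcal{H}_q(n,w)$ is the set of all words of length $n$ over $\mathbb{Z}_q$ with exactly $w$ nonzero entries, with the Hamming distance. An $(n,d,w)_q$-code is a nonempty subset of $\mathcal{H}_q(n,w)$ in which any two distinct words have Hamming distance at least $d$; $A_q(n,d,w)$ is the maximum size of such a code and a code of this size is optimal. A $\mathrm{TOC}_q(n,d,w)$ is a partition of $\mathcal{H}_q(n,w)$ into mutually disjoint optimal $(n,d,w)_q$-codes. *)

theory Defs
  imports Main
begin

definition weight :: "nat list \<Rightarrow> nat" where
  "weight x = card {i. i < length x \<and> x ! i \<noteq> 0}"

definition hdist :: "nat list \<Rightarrow> nat list \<Rightarrow> nat" where
  "hdist x y = card {i. i < length x \<and> x ! i \<noteq> y ! i}"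

definition Hq :: "nat \<Rightarrow> nat \<Rightarrow> nat \<Rightarrow> nat list set" where
  "Hq q n w = {x. length x = n \<and> set x \<subseteq> {0..<q} \<and> weight x = w}"

definition is_code :: "nat \<Rightarrow> nat \<Rightarrow> nat \<Rightarrow> nat \<Rightarrow> nat list set \<Rightarrow> bool" where
  "is_code q n d w C \<longleftrightarrow> C \<noteq> {} \<and> C \<subseteq> Hq q n w \<and>
     (\<forall>x\<in>C. \<forall>y\<in>C. x \<noteq> y \<longrightarrow> hdist x y \<ge> d)"

definition Aq :: "nat \<Rightarrow> nat \<Rightarrow> nat \<Rightarrow> nat \<Rightarrow> nat" where
  "Aq q n d w = Max (card ` {C. is_code q n d w C})"

definition optimal_code :: "nat \<Rightarrow> nat \<Rightarrow> nat \<Rightarrow> nat \<Rightarrow> nat list set \<Rightarrow> bool" where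
  "optimal_code q n d w C \<longleftrightarrow> is_code q n d w C \<and> card C = Aq q n d w"

definition is_TOC :: "nat \<Rightarrow> nat \<Rightarrow> nat \<Rightarrow> nat \<Rightarrow> nat list set set \<Rightarrow> bool" where
  "is_TOC q n d w P \<longleftrightarrow> (\<Union>P = Hq q n w) \<and> (\<forall>C\<in>P. optimal_code q n d w C) \<and>
     (\<forall>C1\<in>P. \<forall>C2\<in>P. C1 \<noteq> C2 \<longrightarrow> C1 \<inter> C2 = {})"

end

theory Submission
  imports Defs "HOL-Number_Theory.Cong"
begin


lemma weight_filter: "weight x = length (filter (\<lambda>v. v \<noteq> 0) x)"
  by (simp add: weight_def length_filter_conv_card)

lemma hdist_filter: "length x = length y \<Longrightarrow> hdist x y = length (filter (\<lambda>(u,v). u \<noteq> v) (zip x y))"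
  unfolding hdist_def length_filter_conv_card by (intro arg_cong[where f=card]) (auto simp: nth_zip)

lemma finite_Hq: "finite (Hq q n w)"
proof -
  have "Hq q n w \<subseteq> {x. set x \<subseteq> {0..<q} \<and> length x = n}" by (auto simp: Hq_def)
  thus ?thesis using finite_lists_length_eq[of "{0..<q}" n] finite_subset by auto
qed

lemma code_finite: "is_code q n d w C \<Longrightarrow> finite C"
  using finite_Hq finite_subset unfolding is_code_def by blast

lemma hdist_all: assumes "length x = 4" "length y = 4" "4 \<le> hdist x y" "k < 4"
  shows "x ! k \<noteq> y ! k"
proof
  assume e: "x ! k = y ! k"
  have "{i. i < length x \<and> x ! i \<noteq> y ! i} \<subseteq> {0..<4} - {k}" using assms e by auto
  hence "hdist x y \<le> card ({0..<4::nat} - {k})" unfolding hdist_def by (intro card_mono) auto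
  also have "\<dots> = 3" using assms by simp
  finally show False using assms by simp
qed

lemma has_zero: assumes "x \<in> Hq q 4 3" shows "\<exists>l<4. x ! l = 0"
proof (rule ccontr)
  assume "\<not> ?thesis"
  hence "{i. i < length x \<and> x ! i \<noteq> 0} = {0..<4}" using assms by (auto simp: Hq_def)
  thus False using assms by (simp add: Hq_def weight_def)
qed

lemma card_filter_sum: "finite A \<Longrightarrow> card {x\<in>A. P x} = (\<Sum>x\<in>A. if P x then 1 else 0)"
proof -
  assume f: "finite A"
  have "card {x\<in>A. P x} = (\<Sum>x\<in>{x\<in>A. P x}. 1)" by (rule card_eq_sum)
  also have "\<dots> = (\<Sum>x\<in>A. if P x then 1 else 0)" using f by (rule sum.inter_filter)
  finally show ?thesis .
qed

lemma code_bound: assumes c: "is_code q 4 4 3 C"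
  shows "3 * card C \<le> 4 * (q - 1) \<and> card C \<le> 4"
proof -
  have fin: "finite C" using code_finite[OF c] .
  have H: "\<And>x. x \<in> C \<Longrightarrow> x \<in> Hq q 4 3" using c by (auto simp: is_code_def)
  have D: "\<And>x y k. x \<in> C \<Longrightarrow> y \<in> C \<Longrightarrow> x \<noteq> y \<Longrightarrow> k < 4 \<Longrightarrow> x ! k \<noteq> y ! k"
    using c H by (intro hdist_all) (auto simp: is_code_def Hq_def)
  have nz: "card {x\<in>C. x ! l \<noteq> 0} \<le> q - 1" if "l < 4" for l
  proof -
    have "inj_on (\<lambda>x. x ! l) {x\<in>C. x ! l \<noteq> 0}" using D that by (auto simp: inj_on_def)
    moreover have "(\<lambda>x. x ! l) ` {x\<in>C. x ! l \<noteq> 0} \<subseteq> {1..<q}"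
    proof
      fix v assume "v \<in> (\<lambda>x. x ! l) ` {x\<in>C. x ! l \<noteq> 0}"
      then obtain x where x: "x \<in> C" "x ! l \<noteq> 0" "v = x ! l" by auto
      hence "x ! l \<in> set x" using H[OF x(1)] that by (auto simp: Hq_def)
      thus "v \<in> {1..<q}" using H[OF x(1)] x by (auto simp: Hq_def)
    qed
    ultimately have "card {x\<in>C. x ! l \<noteq> 0} \<le> card {1..<q}"
      by (intro card_inj_on_le) auto
    thus ?thesis by simp
  qed
  have "(\<Sum>l<4. card {x\<in>C. x ! l \<noteq> 0}) = (\<Sum>l<4. \<Sum>x\<in>C. if x ! l \<noteq> 0 then 1 else 0)"
    by (intro sum.cong refl card_filter_sum[OF fin])
  also have "\<dots> = (\<Sum>x\<in>C. \<Sum>l<4. if x ! l \<noteq> 0 then 1 else 0)" by (rule sum.swap)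
  also have "\<dots> = (\<Sum>x\<in>C. (3::nat))"
  proof (rule sum.cong)
    fix x assume "x \<in> C"
    hence "weight x = 3" "length x = 4" using H by (auto simp: Hq_def)
    hence "card {l\<in>{..<4::nat}. x ! l \<noteq> 0} = 3" by (simp add: weight_def lessThan_def)
    thus "(\<Sum>l<4. if x ! l \<noteq> 0 then 1 else 0) = (3::nat)"
      using card_filter_sum[of "{..<4::nat}" "\<lambda>l. x ! l \<noteq> 0"] by simp
  qed simp
  finally have eq: "(\<Sum>l<4. card {x\<in>C. x ! l \<noteq> 0}) = 3 * card C" by simp
  have "(\<Sum>l<4::nat. card {x\<in>C. x ! l \<noteq> 0}) \<le> (\<Sum>l<4::nat. q - 1)"
    using nz by (intro sum_mono) auto
  hence b1: "3 * card C \<le> 4 * (q - 1)" using eq by simp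
  have "C = (\<Union>l<4. {x\<in>C. x ! l = 0})" using has_zero H by blast
  hence "card C \<le> (\<Sum>l<4. card {x\<in>C. x ! l = 0})" using card_UN_le[of "{..<4::nat}" "\<lambda>l. {x\<in>C. x ! l = 0}"] by simp
  also have "\<dots> \<le> (\<Sum>l<4::nat. 1)"
  proof (rule sum_mono)
    fix l :: nat assume "l \<in> {..<4}"
    thus "card {x\<in>C. x ! l = 0} \<le> 1" using fin D by (subst One_nat_def, subst card_le_Suc0_iff_eq) (auto, metis)
  qed
  finally show ?thesis using b1 by simp
qed

lemma Aq_eq: assumes "is_code q 4 4 3 C0" "card C0 = B" "\<And>C. is_code q 4 4 3 C \<Longrightarrow> card C \<le> B"
  shows "Aq q 4 4 3 = B"
proof -
  have "{C. is_code q 4 4 3 C} \<subseteq> Pow (Hq q 4 3)" by (auto simp: is_code_def)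
  hence "finite {C. is_code q 4 4 3 C}" using finite_Hq by (meson finite_Pow_iff finite_subset)
  thus ?thesis unfolding Aq_def using assms by (intro Max_eqI) auto
qed



lemma hd4: "4 \<le> hdist [a,b,c,d] [e,f,g,h] \<longleftrightarrow> a\<noteq>e \<and> b\<noteq>f \<and> c\<noteq>g \<and> d\<noteq>h"
  by (simp add: hdist_filter)

lemma Hq4: "[a,b,c,d] \<in> Hq q 4 3 \<longleftrightarrow> a<q \<and> b<q \<and> c<q \<and> d<q \<and>
   ((a=0 \<and> b\<noteq>0 \<and> c\<noteq>0 \<and> d\<noteq>0) \<or> (a\<noteq>0 \<and> b=0 \<and> c\<noteq>0 \<and> d\<noteq>0) \<or>
    (a\<noteq>0 \<and> b\<noteq>0 \<and> c=0 \<and> d\<noteq>0) \<or> (a\<noteq>0 \<and> b\<noteq>0 \<and> c\<noteq>0 \<and> d=0))"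
  by (auto simp: Hq_def weight_filter)

lemma len4: "length x = 4 \<Longrightarrow> \<exists>a b c d. x = [a,b,c,d]"
  by (cases x; cases "tl x"; cases "tl (tl x)"; cases "tl (tl (tl x))"; auto)

definition Mw :: "nat \<Rightarrow> nat \<Rightarrow> nat" where "Mw m x = x mod m + 1"

lemma Mw_nz[simp]: "Mw m x \<noteq> 0" "0 \<noteq> Mw m x" by (auto simp: Mw_def)

lemma Mw_le: "0 < m \<Longrightarrow> Mw m x \<le> m" by (simp add: Mw_def Suc_leI)

lemma mod_ne: assumes "0 < t" "t < m" shows "(x + t) mod m \<noteq> x mod (m::nat)"
proof
  assume "(x + t) mod m = x mod m"
  hence "m dvd (x + t) - x" using mod_eq_dvd_iff_nat[of x "x+t" m] by simp
  hence "m dvd t" by simp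
  thus False using assms by (simp add: nat_dvd_not_less)
qed

lemma Mw_ne[simp]: assumes "3 \<le> m"
  shows "Mw m x \<noteq> Mw m (Suc x)" "Mw m x \<noteq> Mw m (Suc (Suc x))" "Mw m (Suc x) \<noteq> Mw m (Suc (Suc x))"
        "Mw m (Suc x) \<noteq> Mw m x" "Mw m (Suc (Suc x)) \<noteq> Mw m x" "Mw m (Suc (Suc x)) \<noteq> Mw m (Suc x)"
proof -
  have 1: "(x + 1) mod m \<noteq> x mod m" using assms by (intro mod_ne) auto
  have 2: "(x + 2) mod m \<noteq> x mod m" using assms by (intro mod_ne) auto
  have 3: "((x+1) + 1) mod m \<noteq> (x+1) mod m" using assms by (intro mod_ne) auto
  show "Mw m x \<noteq> Mw m (Suc x)" "Mw m x \<noteq> Mw m (Suc (Suc x))" "Mw m (Suc x) \<noteq> Mw m (Suc (Suc x))"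
        "Mw m (Suc x) \<noteq> Mw m x" "Mw m (Suc (Suc x)) \<noteq> Mw m x" "Mw m (Suc (Suc x)) \<noteq> Mw m (Suc x)"
    using 1 2 3 by (auto simp: Mw_def)
qed

definition "W0 m a b c = [0, Mw m (b+2), Mw m (c+1), Mw m (a+b+c)]"
definition "W1 m a b c = [Mw m a, 0, Mw m (c+2), Mw m (a+b+c+1)]"
definition "W2 m a b c = [Mw m (a+1), Mw m b, 0, Mw m (a+b+c+2)]"
definition "W3 m a b c = [Mw m (a+2), Mw m (b+1), Mw m c, 0]"

definition cd :: "nat \<Rightarrow> nat \<Rightarrow> nat \<Rightarrow> nat \<Rightarrow> nat list set" where
  "cd m a b c = {W0 m a b c, W1 m a b c, W2 m a b c, W3 m a b c}"

lemma cd_code: assumes "3 \<le> m" "q = m + 1"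
  shows "is_code q 4 4 3 (cd m a b c) \<and> card (cd m a b c) = 4"
  using assms Mw_le[of m] by (auto simp: cd_def W0_def W1_def W2_def W3_def is_code_def hd4 Hq4 less_Suc_eq_le)

lemma canc: "(x + t) mod m = (y + t) mod m \<Longrightarrow> x mod m = y mod (m::nat)"
  using cong_add_rcancel_nat[of x t y m] unfolding cong_def by simp

lemma canc2: "(x + s) mod m = (y + s') mod m \<Longrightarrow> s mod m = s' mod m \<Longrightarrow> x mod m = y mod (m::nat)"
  by (metis canc mod_add_right_eq)

lemma Mw_cong: "x mod m = y mod m \<Longrightarrow> Mw m x = Mw m y" by (simp add: Mw_def)

lemma cd_eq: assumes "a mod m = a' mod m" "b mod m = b' mod m" "c mod m = c' mod m"
  shows "cd m a b c = cd m a' b' c'"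
proof -
  have s: "(a+b+c) mod m = (a'+b'+c') mod m" using assms by (metis mod_add_cong)
  have "\<And>k. (a+k) mod m = (a'+k) mod m" "\<And>k. (b+k) mod m = (b'+k) mod m"
       "\<And>k. (c+k) mod m = (c'+k) mod m" "\<And>k. (a+b+c+k) mod m = (a'+b'+c'+k) mod m"
    using assms s by (metis mod_add_left_eq)+
  hence e: "\<And>k. Mw m (a+k) = Mw m (a'+k)" "\<And>k. Mw m (b+k) = Mw m (b'+k)"
       "\<And>k. Mw m (c+k) = Mw m (c'+k)" "\<And>k. Mw m (a+b+c+k) = Mw m (a'+b'+c'+k)"
    by (auto intro: Mw_cong)
  have "Mw m a = Mw m a'" "Mw m b = Mw m b'" "Mw m c = Mw m c'" "Mw m (a+b+c) = Mw m (a'+b'+c')"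
    using e(1)[of 0] e(2)[of 0] e(3)[of 0] e(4)[of 0] by simp_all
  thus ?thesis unfolding cd_def W0_def W1_def W2_def W3_def by (simp only: e)
qed

lemma canc3a: "(a+b+c) mod m = (a'+b'+c') mod m \<Longrightarrow> b mod m = b' mod m \<Longrightarrow> c mod m = c' mod m \<Longrightarrow> a mod m = a' mod (m::nat)"
proof -
  assume h: "(a+b+c) mod m = (a'+b'+c') mod m" "b mod m = b' mod m" "c mod m = c' mod m"
  have "(a+(b+c)) mod m = (a'+(b'+c')) mod m" using h(1) by (simp add: add.assoc)
  moreover have "(b+c) mod m = (b'+c') mod m" using h(2,3) by (metis mod_add_cong)
  ultimately show ?thesis by (rule canc2)
qed

lemma canc3b: "(a+b+c+1) mod m = (a'+b'+c'+1) mod m \<Longrightarrow> a mod m = a' mod m \<Longrightarrow> c mod m = c' mod m \<Longrightarrow> b mod m = b' mod (m::nat)"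
proof -
  assume h: "(a+b+c+1) mod m = (a'+b'+c'+1) mod m" "a mod m = a' mod m" "c mod m = c' mod m"
  have "(b+(a+c+1)) mod m = (b'+(a'+c'+1)) mod m" using h(1) by (simp add: ac_simps)
  moreover have "(a+c+1) mod m = (a'+c'+1) mod m" using h(2,3) by (metis mod_add_cong)
  ultimately show ?thesis by (rule canc2)
qed

lemma canc3c: "(a+b+c+2) mod m = (a'+b'+c'+2) mod m \<Longrightarrow> a mod m = a' mod m \<Longrightarrow> b mod m = b' mod m \<Longrightarrow> c mod m = c' mod (m::nat)"
proof -
  assume h: "(a+b+c+2) mod m = (a'+b'+c'+2) mod m" "a mod m = a' mod m" "b mod m = b' mod m"
  have "(c+(a+b+2)) mod m = (c'+(a'+b'+2)) mod m" using h(1) by (simp add: ac_simps)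
  moreover have "(a+b+2) mod m = (a'+b'+2) mod m" using h(2,3) by (metis mod_add_cong)
  ultimately show ?thesis by (rule canc2)
qed

lemma W_inj:
  shows "W0 m a b c = W0 m a' b' c' \<Longrightarrow> a mod m = a' mod m \<and> b mod m = b' mod m \<and> c mod m = c' mod m"
    and "W1 m a b c = W1 m a' b' c' \<Longrightarrow> a mod m = a' mod m \<and> b mod m = b' mod m \<and> c mod m = c' mod m"
    and "W2 m a b c = W2 m a' b' c' \<Longrightarrow> a mod m = a' mod m \<and> b mod m = b' mod m \<and> c mod m = c' mod m"
    and "W3 m a b c = W3 m a' b' c' \<Longrightarrow> a mod m = a' mod m \<and> b mod m = b' mod m \<and> c mod m = c' mod m"
proof -
  assume h: "W0 m a b c = W0 m a' b' c'"
  have e: "(b+2) mod m = (b'+2) mod m" "(c+1) mod m = (c'+1) mod m" "(a+b+c) mod m = (a'+b'+c') mod m"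
    using h unfolding W0_def by (simp_all only: list.inject Mw_def add_right_cancel)
  hence "b mod m = b' mod m" "c mod m = c' mod m" using canc[OF e(1)] canc[OF e(2)] by blast+
  thus "a mod m = a' mod m \<and> b mod m = b' mod m \<and> c mod m = c' mod m"
    using e(3) canc3a by blast
next
  assume h: "W1 m a b c = W1 m a' b' c'"
  have e: "a mod m = a' mod m" "(c+2) mod m = (c'+2) mod m" "(a+b+c+1) mod m = (a'+b'+c'+1) mod m"
    using h unfolding W1_def by (simp_all only: list.inject Mw_def add_right_cancel)
  hence "a mod m = a' mod m" "c mod m = c' mod m" using e(1) canc[OF e(2)] by blast+
  thus "a mod m = a' mod m \<and> b mod m = b' mod m \<and> c mod m = c' mod m"
    using e(3) canc3b by blast
next
  assume h: "W2 m a b c = W2 m a' b' c'"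
  have e: "(a+1) mod m = (a'+1) mod m" "b mod m = b' mod m" "(a+b+c+2) mod m = (a'+b'+c'+2) mod m"
    using h unfolding W2_def by (simp_all only: list.inject Mw_def add_right_cancel)
  hence "a mod m = a' mod m" "b mod m = b' mod m" using canc[OF e(1)] e(2) by blast+
  thus "a mod m = a' mod m \<and> b mod m = b' mod m \<and> c mod m = c' mod m"
    using e(3) canc3c by blast
next
  assume h: "W3 m a b c = W3 m a' b' c'"
  have e: "(a+2) mod m = (a'+2) mod m" "(b+1) mod m = (b'+1) mod m" "c mod m = c' mod m"
    using h unfolding W3_def by (simp_all only: list.inject Mw_def add_right_cancel)
  thus "a mod m = a' mod m \<and> b mod m = b' mod m \<and> c mod m = c' mod m" using canc[OF e(1)] canc[OF e(2)] by blast
qed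

lemma W_ne: "W0 m a b c \<noteq> W1 m a' b' c'" "W0 m a b c \<noteq> W2 m a' b' c'" "W0 m a b c \<noteq> W3 m a' b' c'"
  "W1 m a b c \<noteq> W0 m a' b' c'" "W1 m a b c \<noteq> W2 m a' b' c'" "W1 m a b c \<noteq> W3 m a' b' c'"
  "W2 m a b c \<noteq> W0 m a' b' c'" "W2 m a b c \<noteq> W1 m a' b' c'" "W2 m a b c \<noteq> W3 m a' b' c'"
  "W3 m a b c \<noteq> W0 m a' b' c'" "W3 m a b c \<noteq> W1 m a' b' c'" "W3 m a b c \<noteq> W2 m a' b' c'"
  by (simp_all add: W0_def W1_def W2_def W3_def)

lemma cd_disj: assumes "0 < m" "u \<in> cd m a b c" "u \<in> cd m a' b' c'"
  shows "cd m a b c = cd m a' b' c'"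
proof -
  have "a mod m = a' mod m \<and> b mod m = b' mod m \<and> c mod m = c' mod m"
    using assms(2,3) unfolding cd_def by (auto simp: W_ne dest: W_inj)
  thus ?thesis by (intro cd_eq) auto
qed



lemma hit0: "1 \<le> v \<Longrightarrow> v \<le> m \<Longrightarrow> Mw m (v - 1) = v" by (simp add: Mw_def)
lemma hitA: "1 \<le> v \<Longrightarrow> v \<le> m \<Longrightarrow> Mw m (v - 1 + m) = v"
  unfolding Mw_def mod_add_self2 by simp
lemma hitS: "1 \<le> v \<Longrightarrow> v \<le> m \<Longrightarrow> Mw m (v - 1 + s * m) = v"
  unfolding Mw_def mod_mult_self1 by simp

lemma sle: "1 \<le> (m::nat) \<Longrightarrow> s \<le> s * m" by simp

lemma cd_cover: assumes m: "3 \<le> m" and x: "x \<in> Hq (m+1) 4 3"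
  shows "\<exists>a b c. x \<in> cd m a b c"
proof -
  have "length x = 4" using x by (simp add: Hq_def)
  then obtain x0 x1 x2 x3 where xe: "x = [x0,x1,x2,x3]" using len4 by blast
  have B: "x0 \<le> m" "x1 \<le> m" "x2 \<le> m" "x3 \<le> m" using x unfolding xe Hq4 by auto
  have Z: "(x0=0 \<and> x1\<noteq>0 \<and> x2\<noteq>0 \<and> x3\<noteq>0) \<or> (x0\<noteq>0 \<and> x1=0 \<and> x2\<noteq>0 \<and> x3\<noteq>0) \<or>
    (x0\<noteq>0 \<and> x1\<noteq>0 \<and> x2=0 \<and> x3\<noteq>0) \<or> (x0\<noteq>0 \<and> x1\<noteq>0 \<and> x2\<noteq>0 \<and> x3=0)"
    using x unfolding xe Hq4 by auto
  have m1: "1 \<le> m" using m by simp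
  from Z show ?thesis
  proof (elim disjE conjE)
    assume h: "x0 = 0" "x1 \<noteq> 0" "x2 \<noteq> 0" "x3 \<noteq> 0"
    define b where "b = x1 - 1 + m - 2"
    define c where "c = x2 - 1 + m - 1"
    define s where "s = b + c"
    define a where "a = x3 - 1 + s*m - s"
    have "a + s = x3 - 1 + s*m" using sle[OF m1, of s] unfolding a_def by linarith
    moreover have "b+2 = x1 - 1 + m" "c+1 = x2 - 1 + m" using m unfolding b_def c_def by auto
    moreover have "a+b+c = a + s" unfolding s_def by simp
    ultimately have e: "b+2 = x1 - 1 + m" "c+1 = x2 - 1 + m" "a+b+c = x3 - 1 + s*m" by simp_all
    have "x = W0 m a b c" unfolding W0_def e xe using h B hitA hitS by simp
    thus ?thesis unfolding cd_def by blast
  next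
    assume h: "x0 \<noteq> 0" "x1 = 0" "x2 \<noteq> 0" "x3 \<noteq> 0"
    define a where "a = x0 - 1"
    define c where "c = x2 - 1 + m - 2"
    define s where "s = a + c + 1"
    define b where "b = x3 - 1 + s*m - s"
    have "b + s = x3 - 1 + s*m" using sle[OF m1, of s] unfolding b_def by linarith
    hence e: "c+2 = x2 - 1 + m" "a+b+c+1 = x3 - 1 + s*m"
      using m unfolding c_def s_def by (auto simp: ac_simps)
    have "x = W1 m a b c" unfolding W1_def e xe using h B hitA hitS hit0 a_def by simp
    thus ?thesis unfolding cd_def by blast
  next
    assume h: "x0 \<noteq> 0" "x1 \<noteq> 0" "x2 = 0" "x3 \<noteq> 0"
    define a where "a = x0 - 1 + m - 1"
    define b where "b = x1 - 1"
    define s where "s = a + b + 2"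
    define c where "c = x3 - 1 + s*m - s"
    have "c + s = x3 - 1 + s*m" using sle[OF m1, of s] unfolding c_def by linarith
    hence e: "a+1 = x0 - 1 + m" "a+b+c+2 = x3 - 1 + s*m"
      using m h unfolding a_def s_def by (auto simp: ac_simps)
    have "x = W2 m a b c" unfolding W2_def e xe using h B hitA hitS hit0 b_def by simp
    thus ?thesis unfolding cd_def by blast
  next
    assume h: "x0 \<noteq> 0" "x1 \<noteq> 0" "x2 \<noteq> 0" "x3 = 0"
    define a where "a = x0 - 1 + m - 2"
    define b where "b = x1 - 1 + m - 1"
    define c where "c = x2 - 1"
    have e: "a+2 = x0 - 1 + m" "b+1 = x1 - 1 + m"
      using m unfolding a_def b_def by auto
    have "x = W3 m a b c" unfolding W3_def e xe using h B hitA hitS hit0 c_def by simp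
    thus ?thesis unfolding cd_def by blast
  qed
qed

lemma toc_big: assumes "4 \<le> q" shows "\<exists>P. is_TOC q 4 4 3 P"
proof -
  define m where "m = q - 1"
  have m: "3 \<le> m" "q = m + 1" using assms unfolding m_def by auto
  define P where "P = {cd m a b c | a b c. True}"
  have A: "Aq q 4 4 3 = 4"
    using cd_code[OF m, of 0 0 0] code_bound by (intro Aq_eq) blast+
  have "\<Union>P = Hq q 4 3"
  proof
    show "\<Union>P \<subseteq> Hq q 4 3" using cd_code[OF m] unfolding P_def is_code_def by blast
    show "Hq q 4 3 \<subseteq> \<Union>P" using cd_cover[OF m(1)] m(2) unfolding P_def by blast
  qed
  moreover have "\<forall>C\<in>P. optimal_code q 4 4 3 C"
    using cd_code[OF m] A unfolding P_def optimal_code_def by auto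
  moreover have "\<forall>C1\<in>P. \<forall>C2\<in>P. C1 \<noteq> C2 \<longrightarrow> C1 \<inter> C2 = {}"
  proof (intro ballI impI)
    fix C1 C2 assume C: "C1 \<in> P" "C2 \<in> P" "C1 \<noteq> C2"
    obtain a b c where 1: "C1 = cd m a b c" using C(1) unfolding P_def by blast
    obtain a' b' c' where 2: "C2 = cd m a' b' c'" using C(2) unfolding P_def by blast
    show "C1 \<inter> C2 = {}"
    proof (rule ccontr)
      assume "C1 \<inter> C2 \<noteq> {}"
      then obtain u where "u \<in> cd m a b c" "u \<in> cd m a' b' c'" using 1 2 by blast
      hence "cd m a b c = cd m a' b' c'" using cd_disj[of m u] m by simp
      thus False using 1 2 C(3) by simp
    qed
  qed
  ultimately show ?thesis unfolding is_TOC_def by blast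
qed

definition "pA b c d = {[0,b,c,d],[b,0,3-c,3-d::nat]}"
definition "pB a b d = {[a,b,0,d],[3-a,3-b,d,0::nat]}"

lemma pA_disj: "b \<in> {1,2} \<Longrightarrow> c \<in> {1,2} \<Longrightarrow> d \<in> {1,2} \<Longrightarrow> b' \<in> {1,2} \<Longrightarrow> c' \<in> {1,2} \<Longrightarrow> d' \<in> {1,2}
  \<Longrightarrow> u \<in> pA b c d \<Longrightarrow> u \<in> pA b' c' d' \<Longrightarrow> pA b c d = pA b' c' d'"
proof -
  assume h: "b \<in> {1,2}" "c \<in> {1,2}" "d \<in> {1,2}" "b' \<in> {1,2}" "c' \<in> {1,2}" "d' \<in> {1,2}"
    "u \<in> pA b c d" "u \<in> pA b' c' d'"
  have "b = b' \<and> c = c' \<and> d = d'"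
    using h(7,8) unfolding pA_def insert_iff empty_iff
  proof (elim disjE)
  qed (insert h(1-6), auto)
  thus ?thesis by simp
qed
lemma pB_disj: "b \<in> {1,2} \<Longrightarrow> c \<in> {1,2} \<Longrightarrow> d \<in> {1,2} \<Longrightarrow> b' \<in> {1,2} \<Longrightarrow> c' \<in> {1,2} \<Longrightarrow> d' \<in> {1,2}
  \<Longrightarrow> u \<in> pB b c d \<Longrightarrow> u \<in> pB b' c' d' \<Longrightarrow> pB b c d = pB b' c' d'"
proof -
  assume h: "b \<in> {1,2}" "c \<in> {1,2}" "d \<in> {1,2}" "b' \<in> {1,2}" "c' \<in> {1,2}" "d' \<in> {1,2}"
    "u \<in> pB b c d" "u \<in> pB b' c' d'"
  have "b = b' \<and> c = c' \<and> d = d'"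
    using h(7,8) unfolding pB_def insert_iff empty_iff
  proof (elim disjE)
  qed (insert h(1-6), auto)
  thus ?thesis by simp
qed
lemma pAB_disj: "c \<in> {1,2} \<Longrightarrow> d \<in> {1,2} \<Longrightarrow> u \<in> pA b c d \<Longrightarrow> u \<in> pB a' b' d' \<Longrightarrow> False"
  unfolding pA_def pB_def insert_iff empty_iff by (elim disjE) auto

lemma toc3: "\<exists>P. is_TOC 3 4 4 3 P"
proof -
  define P where "P = {pA b c d | b c d. b \<in> {1,2} \<and> c \<in> {1,2} \<and> d \<in> {1,2}} \<union>
                      {pB a b d | a b d. a \<in> {1,2} \<and> b \<in> {1,2} \<and> d \<in> {1,2}}"
  have code: "is_code 3 4 4 3 C \<and> card C = 2" if "C \<in> P" for C
    using that unfolding P_def pA_def pB_def by (auto simp: is_code_def hd4 Hq4)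
  have A: "Aq 3 4 4 3 = 2"
  proof (rule Aq_eq)
    show "is_code 3 4 4 3 (pA 1 1 1)" "card (pA 1 1 1) = 2" using code[of "pA 1 1 1"] unfolding P_def by auto
    show "\<And>C. is_code 3 4 4 3 C \<Longrightarrow> card C \<le> 2" using code_bound by fastforce
  qed
  have "\<Union>P = Hq 3 4 3"
  proof
    show "\<Union>P \<subseteq> Hq 3 4 3" using code unfolding is_code_def by blast
    show "Hq 3 4 3 \<subseteq> \<Union>P"
    proof
      fix x assume x: "x \<in> Hq 3 4 3"
      have "length x = 4" using x by (simp add: Hq_def)
      then obtain x0 x1 x2 x3 where xe: "x = [x0,x1,x2,x3]" using len4 by blast
      have B: "x0 < 3" "x1 < 3" "x2 < 3" "x3 < 3" using x unfolding xe Hq4 by auto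
      have Z: "(x0=0 \<and> x1\<noteq>0 \<and> x2\<noteq>0 \<and> x3\<noteq>0) \<or> (x0\<noteq>0 \<and> x1=0 \<and> x2\<noteq>0 \<and> x3\<noteq>0) \<or>
        (x0\<noteq>0 \<and> x1\<noteq>0 \<and> x2=0 \<and> x3\<noteq>0) \<or> (x0\<noteq>0 \<and> x1\<noteq>0 \<and> x2\<noteq>0 \<and> x3=0)"
        using x unfolding xe Hq4 by auto
      from Z show "x \<in> \<Union>P"
      proof (elim disjE conjE)
        assume "x0 = 0" "x1 \<noteq> 0" "x2 \<noteq> 0" "x3 \<noteq> 0"
        hence "x \<in> pA x1 x2 x3" "x1 \<in> {1,2}" "x2 \<in> {1,2}" "x3 \<in> {1,2}" using B unfolding xe pA_def by auto
        hence "x \<in> pA x1 x2 x3" "pA x1 x2 x3 \<in> P" unfolding P_def by blast+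
        thus ?thesis by blast
      next
        assume "x0 \<noteq> 0" "x1 = 0" "x2 \<noteq> 0" "x3 \<noteq> 0"
        hence "x \<in> pA x0 (3-x2) (3-x3)" "x0 \<in> {1,2}" "3-x2 \<in> {1,2}" "3-x3 \<in> {1,2}" using B unfolding xe pA_def by auto
        hence "x \<in> pA x0 (3-x2) (3-x3)" "pA x0 (3-x2) (3-x3) \<in> P" unfolding P_def by blast+
        thus ?thesis by blast
      next
        assume "x0 \<noteq> 0" "x1 \<noteq> 0" "x2 = 0" "x3 \<noteq> 0"
        hence "x \<in> pB x0 x1 x3" "x0 \<in> {1,2}" "x1 \<in> {1,2}" "x3 \<in> {1,2}" using B unfolding xe pB_def by auto
        hence "x \<in> pB x0 x1 x3" "pB x0 x1 x3 \<in> P" unfolding P_def by blast+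
        thus ?thesis by blast
      next
        assume "x0 \<noteq> 0" "x1 \<noteq> 0" "x2 \<noteq> 0" "x3 = 0"
        hence "x \<in> pB (3-x0) (3-x1) x2" "3-x0 \<in> {1,2}" "3-x1 \<in> {1,2}" "x2 \<in> {1,2}" using B unfolding xe pB_def by auto
        hence "x \<in> pB (3-x0) (3-x1) x2" "pB (3-x0) (3-x1) x2 \<in> P" unfolding P_def by blast+
        thus ?thesis by blast
      qed
    qed
  qed
  moreover have "\<forall>C\<in>P. optimal_code 3 4 4 3 C"
    using code A unfolding optimal_code_def by auto
  moreover have "\<forall>C1\<in>P. \<forall>C2\<in>P. C1 \<noteq> C2 \<longrightarrow> C1 \<inter> C2 = {}"
  proof (intro ballI impI)
    fix C1 C2 assume C: "C1 \<in> P" "C2 \<in> P" "C1 \<noteq> C2"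
    show "C1 \<inter> C2 = {}"
    proof (rule ccontr)
      assume "C1 \<inter> C2 \<noteq> {}"
      then obtain u where u: "u \<in> C1" "u \<in> C2" by blast
      have AB: "(\<exists>b c d. C = pA b c d \<and> b \<in> {1,2} \<and> c \<in> {1,2} \<and> d \<in> {1,2}) \<or>
                (\<exists>a b d. C = pB a b d \<and> a \<in> {1,2} \<and> b \<in> {1,2} \<and> d \<in> {1,2})" if "C \<in> P" for C
        using that unfolding P_def by blast
      from AB[OF C(1)] AB[OF C(2)] show False
      proof (elim disjE exE conjE)
        fix b c d b' c' d' assume "C1 = pA b c d" "b \<in> {1,2}" "c \<in> {1,2}" "d \<in> {1,2}"
          "C2 = pA b' c' d'" "b' \<in> {1,2}" "c' \<in> {1,2}" "d' \<in> {1,2}"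
        thus False using pA_disj[of b c d b' c' d' u] u C(3) by blast
      next
        fix b c d b' c' d' assume "C1 = pA b c d" "b \<in> {1,2}" "c \<in> {1,2}" "d \<in> {1,2}"
          "C2 = pB b' c' d'" "b' \<in> {1,2}" "c' \<in> {1,2}" "d' \<in> {1,2}"
        thus False using pAB_disj[of c d u b b' c' d'] u by blast
      next
        fix b c d b' c' d' assume "C1 = pB b c d" "b \<in> {1,2}" "c \<in> {1,2}" "d \<in> {1,2}"
          "C2 = pA b' c' d'" "b' \<in> {1,2}" "c' \<in> {1,2}" "d' \<in> {1,2}"
        thus False using pAB_disj[of c' d' u b' b c d] u by blast
      next
        fix b c d b' c' d' assume "C1 = pB b c d" "b \<in> {1,2}" "c \<in> {1,2}" "d \<in> {1,2}"
          "C2 = pB b' c' d'" "b' \<in> {1,2}" "c' \<in> {1,2}" "d' \<in> {1,2}"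
        thus False using pB_disj[of b c d b' c' d' u] u C(3) by blast
      qed
    qed
  qed
  ultimately show ?thesis unfolding is_TOC_def by blast
qed

lemma toc2: "\<exists>P. is_TOC 2 4 4 3 P"
proof -
  define P where "P = (\<lambda>w. {w}) ` Hq 2 4 3"
  have w: "[0,1,1,1] \<in> Hq 2 4 3" by (simp add: Hq4)
  have c1: "is_code 2 4 4 3 {w}" if "w \<in> Hq 2 4 3" for w using that by (simp add: is_code_def)
  have A: "Aq 2 4 4 3 = 1"
    using c1[OF w] code_bound by (intro Aq_eq) fastforce+
  have "is_TOC 2 4 4 3 P" unfolding is_TOC_def optimal_code_def A P_def using c1 by auto
  thus ?thesis by blast
qed

theorem theorem4p6:
  fixes q :: nat
  assumes "q \<ge> 2"
  shows "\<exists>P. is_TOC q 4 4 3 P"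
proof -
  consider "q = 2" | "q = 3" | "4 \<le> q" using assms by linarith
  thus ?thesis using toc2 toc3 toc_big by cases auto
qed

end
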